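(* In the cell FDE setting described in the context, assume (H1), (H2), (H3) and $q(0)>0$. Let $\phi=(\varphi,\psi)\in X_+$ with $\varphi(0)>0$ and let $(w,v)=(w^\phi,v^\phi)$. If $v(t)\to0$ as $t\to\infty$, then $w(t)\to\infty$ as $t\to\infty$. In particular, $(w(t),v(t))$ does not converge to $(0,0)$ as $t\to\infty$.
   Context: Let $h>0$, $R_-<0$, $I:=(R_-,\infty)$. $\|\phi\|_0:=\max_{\theta\in[-h,0]}|\phi(\theta)|$, $\|\phi\|_1:=\|\phi\|_0+\|\phi'\|_0$; $x_t(s):=x(t+s)$, $s\in[-h,0]$. Let $U:=C^1([-h,0],\mathbb R)\times C^1([-h,0],I)$, $U_+:=C^1([-h,0],[0,\infty)^2)$, $q:I\to\mathbb R$, $j:U\to\mathbb R$, $\mu\ge0$. Cell FDE: $w'(t)=q(v(t))w(t)$, $v'(t)=j(w_t,v_t)-\mu v(t)$, $t>0$, $(w_0,v_0)=(\varphi,\psi)$. $F(\varphi,\psi):=(q(\psi(0))\varphi(0),j(\varphi,\psi)-\mu\psi(0))$, $X:=\{\phi\in U:\phi'(0)=F(\phi)\}$, $X_+:=X\cap U_+$. Solutions are $C^1$ maps $x=(w,v)$ on $[-h,t_* )$ with $x_0=\phi$, $x_t\in U$, satisfying the equations on $(0,t_* )$. (S): $f$ is $C^1$, each $Df(\phi)$ extends to a linear map on $C([-h,0],\mathbb R^n)$ and $(\phi,\chi)\mapsto D_ef(\phi)\chi$ is continuous. (sLb) on $\mathcal O_+$: for each $\|\cdot\|_1$-bounded $B\subset\mathcal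 O_+$ there is $L_B$ with $|f(\phi)-f(\chi)|\le L_B\|\phi-\chi\|_0$ on $B$. (H1): $j$ satisfies (S) on $U$, (sLb) on $U_+$, $j\ge0$ on $U_+$, and $j(B_1\times B_2)$ is bounded whenever $B_1\times B_2\subset U_+$ with $B_1$ bounded. (H2): $q$ bounded and $C^1$. (H3): $X_+\neq\emptyset$. Under (H1)-(H3) each $\phi\in X_+$ has a unique solution on $[-h,\infty)$ with segments in $X_+$. *)

theory Defs
  imports "HOL-Analysis.Analysis"
begin

text \<open>Functions on [-h,0] are represented as total functions that vanish outside
  [-h,0]. Pairs (w,v) are represented as functions into real \<times> real (Euclidean norm).\<close>

definition ext0 :: "real \<Rightarrow> (real \<Rightarrow> 'a::zero) \<Rightarrow> bool" where
  "ext0 h \<phi> \<longleftrightarrow> (\<forall>\<theta>. \<theta> \<notin> {-h..0} \<longrightarrow> \<phi> \<theta> = 0)"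

definition C1 :: "real \<Rightarrow> (real \<Rightarrow> 'a::real_normed_vector) \<Rightarrow> bool" where
  "C1 h \<phi> \<longleftrightarrow> (\<exists>\<phi>'. (\<forall>\<theta>\<in>{-h..0}. (\<phi> has_vector_derivative \<phi>' \<theta>) (at \<theta> within {-h..0}))
                    \<and> continuous_on {-h..0} \<phi>')"

definition dseg :: "real \<Rightarrow> (real \<Rightarrow> 'a::real_normed_vector) \<Rightarrow> real \<Rightarrow> 'a" where
  "dseg h \<phi> \<theta> = vector_derivative \<phi> (at \<theta> within {-h..0})"

definition nrm0 :: "real \<Rightarrow> (real \<Rightarrow> 'a::real_normed_vector) \<Rightarrow> real" where
  "nrm0 h \<phi> = (SUP \<theta>\<in>{-h..0}. norm (\<phi> \<theta>))"

definition nrm1 :: "real \<Rightarrow> (real \<Rightarrow> 'a::real_normed_vector) \<Rightarrow> real" where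
  "nrm1 h \<phi> = nrm0 h \<phi> + nrm0 h (dseg h \<phi>)"

definition E1 :: "real \<Rightarrow> (real \<Rightarrow> real \<times> real) set" where
  "E1 h = {\<phi>. C1 h \<phi> \<and> ext0 h \<phi>}"

definition E0 :: "real \<Rightarrow> (real \<Rightarrow> real \<times> real) set" where
  "E0 h = {\<phi>. continuous_on {-h..0} \<phi> \<and> ext0 h \<phi>}"

definition Uset :: "real \<Rightarrow> real \<Rightarrow> (real \<Rightarrow> real \<times> real) set" where
  "Uset h Rm = {\<phi>\<in>E1 h. \<forall>\<theta>\<in>{-h..0}. snd (\<phi> \<theta>) > Rm}"

definition Uplus :: "real \<Rightarrow> (real \<Rightarrow> real \<times> real) set" where
  "Uplus h = {\<phi>\<in>E1 h. \<forall>\<theta>\<in>{-h..0}. fst (\<phi> \<theta>) \<ge> 0 \<and> snd (\<phi> \<theta>) \<ge> 0}"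

definition pairf :: "(real \<Rightarrow> real) \<Rightarrow> (real \<Rightarrow> real) \<Rightarrow> real \<Rightarrow> real \<times> real" where
  "pairf a b = (\<lambda>\<theta>. (a \<theta>, b \<theta>))"

definition lin_on :: "(real \<Rightarrow> real \<times> real) set \<Rightarrow> ((real \<Rightarrow> real \<times> real) \<Rightarrow> real) \<Rightarrow> bool" where
  "lin_on E L \<longleftrightarrow> (\<forall>\<zeta>1\<in>E. \<forall>\<zeta>2\<in>E. L (\<lambda>\<theta>. \<zeta>1 \<theta> + \<zeta>2 \<theta>) = L \<zeta>1 + L \<zeta>2)
                 \<and> (\<forall>c::real. \<forall>\<zeta>\<in>E. L (\<lambda>\<theta>. c *\<^sub>R \<zeta> \<theta>) = c * L \<zeta>)"

text \<open>Condition (S) for a real-valued f on an open set Ob of C^1([-h,0],R^2):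
  f is C^1 (Frechet, w.r.t. the norm nrm1), each derivative Df(phi) extends to a linear
  map D_e f(phi) on C([-h,0],R^2), and (phi,chi) \<mapsto> D_e f(phi) chi is continuous on
  Ob \<times> C([-h,0],R^2).\<close>
definition condS :: "real \<Rightarrow> (real \<Rightarrow> real \<times> real) set \<Rightarrow> ((real \<Rightarrow> real \<times> real) \<Rightarrow> real) \<Rightarrow> bool" where
  "condS h Ob f \<longleftrightarrow> (\<exists>Df De.
     (\<forall>\<phi>\<in>Ob. lin_on (E1 h) (Df \<phi>) \<and> (\<exists>K. \<forall>\<zeta>\<in>E1 h. \<bar>Df \<phi> \<zeta>\<bar> \<le> K * nrm1 h \<zeta>))
   \<and> (\<forall>\<phi>\<in>Ob. \<forall>\<epsilon>>0. \<exists>\<delta>>0. \<forall>\<zeta>\<in>E1 h. nrm1 h \<zeta> < \<delta> \<and> (\<lambda>\<theta>. \<phi> \<theta> + \<zeta> \<theta>) \<in> Ob \<longrightarrow>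
        \<bar>f (\<lambda>\<theta>. \<phi> \<theta> + \<zeta> \<theta>) - f \<phi> - Df \<phi> \<zeta>\<bar> \<le> \<epsilon> * nrm1 h \<zeta>)
   \<and> (\<forall>\<phi>\<in>Ob. \<forall>\<epsilon>>0. \<exists>\<delta>>0. \<forall>\<psi>\<in>Ob. nrm1 h (\<lambda>\<theta>. \<psi> \<theta> - \<phi> \<theta>) < \<delta> \<longrightarrow>
        (\<forall>\<zeta>\<in>E1 h. \<bar>Df \<psi> \<zeta> - Df \<phi> \<zeta>\<bar> \<le> \<epsilon> * nrm1 h \<zeta>))
   \<and> (\<forall>\<phi>\<in>Ob. lin_on (E0 h) (De \<phi>) \<and> (\<forall>\<zeta>\<in>E1 h. De \<phi> \<zeta> = Df \<phi> \<zeta>))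
   \<and> (\<forall>\<phi>\<in>Ob. \<forall>\<zeta>\<in>E0 h. \<forall>\<epsilon>>0. \<exists>\<delta>>0. \<forall>\<psi>\<in>Ob. \<forall>\<xi>\<in>E0 h.
        nrm1 h (\<lambda>\<theta>. \<psi> \<theta> - \<phi> \<theta>) < \<delta> \<and> nrm0 h (\<lambda>\<theta>. \<xi> \<theta> - \<zeta> \<theta>) < \<delta> \<longrightarrow>
        \<bar>De \<psi> \<xi> - De \<phi> \<zeta>\<bar> < \<epsilon>))"

definition sLb :: "real \<Rightarrow> (real \<Rightarrow> real \<times> real) set \<Rightarrow> ((real \<Rightarrow> real \<times> real) \<Rightarrow> real) \<Rightarrow> bool" where
  "sLb h Ob f \<longleftrightarrow> (\<forall>B\<subseteq>Ob. (\<exists>M. \<forall>\<phi>\<in>B. nrm1 h \<phi> \<le> M) \<longrightarrow>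
      (\<exists>L. \<forall>\<phi>\<in>B. \<forall>\<zeta>\<in>B. \<bar>f \<phi> - f \<zeta>\<bar> \<le> L * nrm0 h (\<lambda>\<theta>. \<phi> \<theta> - \<zeta> \<theta>)))"

definition H1 :: "real \<Rightarrow> real \<Rightarrow> ((real \<Rightarrow> real \<times> real) \<Rightarrow> real) \<Rightarrow> bool" where
  "H1 h Rm j \<longleftrightarrow> condS h (Uset h Rm) j \<and> sLb h (Uplus h) j \<and> (\<forall>\<phi>\<in>Uplus h. j \<phi> \<ge> 0)
     \<and> (\<forall>B1 B2. (\<forall>a\<in>B1. \<forall>b\<in>B2. pairf a b \<in> Uplus h) \<and> (\<exists>M. \<forall>a\<in>B1. nrm1 h a \<le> M)
          \<longrightarrow> bounded {j (pairf a b) | a b. a \<in> B1 \<and> b \<in> B2})"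

definition H2 :: "real \<Rightarrow> (real \<Rightarrow> real) \<Rightarrow> bool" where
  "H2 Rm q \<longleftrightarrow> bounded (q ` {Rm<..}) \<and>
     (\<exists>q'. (\<forall>x\<in>{Rm<..}. (q has_real_derivative q' x) (at x)) \<and> continuous_on {Rm<..} q')"

definition Fmap :: "(real \<Rightarrow> real) \<Rightarrow> ((real \<Rightarrow> real \<times> real) \<Rightarrow> real) \<Rightarrow> real \<Rightarrow> (real \<Rightarrow> real \<times> real) \<Rightarrow> real \<times> real" where
  "Fmap q j \<mu> \<phi> = (q (snd (\<phi> 0)) * fst (\<phi> 0), j \<phi> - \<mu> * snd (\<phi> 0))"

definition Xset :: "real \<Rightarrow> real \<Rightarrow> (real \<Rightarrow> real) \<Rightarrow> ((real \<Rightarrow> real \<times> real) \<Rightarrow> real) \<Rightarrow> real \<Rightarrow> (real \<Rightarrow> real \<times> real) set" where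
  "Xset h Rm q j \<mu> = {\<phi>\<in>Uset h Rm. dseg h \<phi> 0 = Fmap q j \<mu> \<phi>}"

definition Xplus :: "real \<Rightarrow> real \<Rightarrow> (real \<Rightarrow> real) \<Rightarrow> ((real \<Rightarrow> real \<times> real) \<Rightarrow> real) \<Rightarrow> real \<Rightarrow> (real \<Rightarrow> real \<times> real) set" where
  "Xplus h Rm q j \<mu> = Xset h Rm q j \<mu> \<inter> Uplus h"

definition seg :: "real \<Rightarrow> (real \<Rightarrow> real \<times> real) \<Rightarrow> real \<Rightarrow> real \<Rightarrow> real \<times> real" where
  "seg h x t = (\<lambda>s. if s \<in> {-h..0} then x (t + s) else 0)"

definition is_solution :: "real \<Rightarrow> real \<Rightarrow> (real \<Rightarrow> real) \<Rightarrow> ((real \<Rightarrow> real \<times> real) \<Rightarrow> real) \<Rightarrow> real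
      \<Rightarrow> (real \<Rightarrow> real \<times> real) \<Rightarrow> (real \<Rightarrow> real \<times> real) \<Rightarrow> bool" where
  "is_solution h Rm q j \<mu> \<phi> x \<longleftrightarrow>
     (\<exists>x'. (\<forall>t\<in>{-h..}. (x has_vector_derivative x' t) (at t within {-h..})) \<and> continuous_on {-h..} x')
   \<and> seg h x 0 = \<phi>
   \<and> (\<forall>t\<ge>0. seg h x t \<in> Uset h Rm)
   \<and> (\<forall>t>0. (x has_vector_derivative
          (q (snd (x t)) * fst (x t), j (seg h x t) - \<mu> * snd (x t))) (at t))"

end

theory Submission
  imports Defs
begin

lemma fstd: "(x has_vector_derivative D) F \<Longrightarrow> ((\<lambda>t. fst (x t)) has_real_derivative fst D) F"
  unfolding has_real_derivative_iff_has_vector_derivative has_vector_derivative_def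
  by (drule has_derivative_fst) simp

lemma main_growth:
  fixes h Rm \<mu> :: real and q :: "real \<Rightarrow> real" and j :: "(real \<Rightarrow> real \<times> real) \<Rightarrow> real"
    and \<phi> x :: "real \<Rightarrow> real \<times> real"
  assumes h: "h > 0" and H2: "H2 Rm q" and q0: "q 0 > 0" and Rm: "Rm < 0"
    and w0: "fst (\<phi> 0) > 0"
    and sol: "is_solution h Rm q j \<mu> \<phi> x"
    and vlim: "((\<lambda>t. snd (x t)) \<longlongrightarrow> 0) at_top"
  shows "filterlim (\<lambda>t. fst (x t)) at_top at_top"
proof -
  define f where "f s = q (snd (x s))" for s
  define I where "I t = integral {0..t} f" for t
  obtain x' where xd: "\<forall>t\<in>{-h..}. (x has_vector_derivative x' t) (at t within {-h..})"
    and seg0: "seg h x 0 = \<phi>" and segU: "\<forall>t\<ge>0. seg h x t \<in> Uset h Rm"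
    and xd2: "\<forall>t>0. (x has_vector_derivative
          (q (snd (x t)) * fst (x t), j (seg h x t) - \<mu> * snd (x t))) (at t)"
    using sol unfolding is_solution_def by blast
  have x0: "x 0 = \<phi> 0"
    using fun_cong[OF seg0, of 0] h by (simp add: seg_def)
  have vRm: "snd (x t) > Rm" if "t \<ge> 0" for t
  proof -
    have "seg h x t \<in> Uset h Rm" using segU that by auto
    hence "snd (seg h x t 0) > Rm" unfolding Uset_def using h by auto
    thus ?thesis using h by (simp add: seg_def)
  qed
  have xc: "continuous_on {-h..} x"
    using xd has_vector_derivative_continuous continuous_on_eq_continuous_within by blast
  hence xc0: "continuous_on {0..} x"
    by (rule continuous_on_subset) (use h in auto)
  obtain q' where qd: "\<forall>y\<in>{Rm<..}. (q has_real_derivative q' y) (at y)"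
    using H2 unfolding H2_def by blast
  have qc: "isCont q y" if "y > Rm" for y
    using qd that DERIV_isCont by auto
  have qcon: "continuous_on {Rm<..} q"
    using qc continuous_at_imp_continuous_on by blast
  have fc: "continuous_on {0..} f"
    unfolding f_def
  proof (rule continuous_on_compose2[OF qcon])
    show "continuous_on {0..} (\<lambda>s. snd (x s))"
      using xc0 by (intro continuous_intros)
    show "(\<lambda>s. snd (x s)) ` {0..} \<subseteq> {Rm<..}" using vRm by auto
  qed
  have Id: "(I has_real_derivative f s) (at s)" if "s > 0" for s
  proof -
    have "continuous_on {0..s+1} f" using fc by (rule continuous_on_subset) auto
    from integral_has_vector_derivative[OF this, of s] that
    have "(I has_vector_derivative f s) (at s within {0..s+1})"
      unfolding I_def by auto
    moreover have "s \<in> interior {0..s+1}" using that by simp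
    ultimately show ?thesis
      unfolding has_real_derivative_iff_has_vector_derivative by (metis at_within_interior)
  qed
  have Ic: "continuous_on {0..t} I" if "t \<ge> 0" for t
  proof -
    have "continuous_on {0..t} f" using fc by (rule continuous_on_subset) auto
    from integral_has_vector_derivative[OF this]
    show ?thesis unfolding I_def
      using has_vector_derivative_continuous continuous_on_eq_continuous_within by blast
  qed
  have wrep: "fst (x t) = fst (x 0) * exp (I t)" if "t > 0" for t
  proof -
    define y where "y s = fst (x s) * exp (- I s)" for s
    have "y t = y 0"
    proof (rule DERIV_isconst_end[OF that])
      show "continuous_on {0..t} y"
        unfolding y_def
        using Ic[of t] that continuous_on_subset[OF xc0, of "{0..t}"]
        by (auto intro!: continuous_intros)
      fix s assume s: "0 < s" "s < t"
      have "((\<lambda>s. fst (x s)) has_real_derivative f s * fst (x s)) (at s)"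
        using fstd[OF xd2[rule_format, OF s(1)]] by (simp add: f_def)
      moreover have "((\<lambda>s. exp (- I s)) has_real_derivative exp (- I s) * (- f s)) (at s)"
        using Id[OF s(1)] by (auto intro!: derivative_eq_intros)
      ultimately have "(y has_real_derivative
          fst (x s) * (exp (- I s) * (- f s)) + f s * fst (x s) * exp (- I s)) (at s)"
        unfolding y_def by (rule DERIV_mult')
      thus "(y has_real_derivative 0) (at s)" by (simp add: algebra_simps)
    qed
    thus ?thesis unfolding y_def I_def by (simp add: exp_minus field_simps)
  qed
  define c where "c = q 0 / 2"
  have cpos: "c > 0" using q0 by (simp add: c_def)
  have "((\<lambda>t. f t) \<longlongrightarrow> q 0) at_top"
    unfolding f_def using isCont_tendsto_compose[OF qc[OF Rm] vlim] .
  hence "eventually (\<lambda>t. f t > c) at_top"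
    using q0 by (intro order_tendstoD) (auto simp: c_def)
  then obtain T0 where T0: "\<And>t. t \<ge> T0 \<Longrightarrow> f t > c"
    by (auto simp: eventually_at_top_linorder)
  define T where "T = max T0 1"
  have T: "T > 0" "\<And>t. t \<ge> T \<Longrightarrow> f t > c" using T0 by (auto simp: T_def)
  have Ilow: "I t \<ge> I T + c * (t - T)" if "t \<ge> T" for t
  proof -
    have fi: "f integrable_on {0..t}"
      using fc by (intro integrable_continuous_interval continuous_on_subset[OF fc]) auto
    have "I t = I T + integral {T..t} f"
      unfolding I_def using Henstock_Kurzweil_Integration.integral_combine[of 0 T t f] that fi T by auto
    moreover have "integral {T..t} (\<lambda>_. c) \<le> integral {T..t} f"
      using T by (intro integral_le integrable_continuous_interval
          continuous_on_subset[OF fc]) (auto intro: less_imp_le)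
    ultimately show ?thesis using that by (simp add: mult.commute)
  qed
  define K where "K = fst (x 0) * exp (I T - c * T)"
  have K: "K > 0" using w0 x0 by (simp add: K_def)
  have lowb: "fst (x t) \<ge> K * exp (c * t)" if "t \<ge> T" for t
  proof -
    have "fst (x t) = fst (x 0) * exp (I t)" using wrep that T by auto
    also have "\<dots> \<ge> fst (x 0) * exp (I T + c * (t - T))"
      using Ilow[OF that] w0 x0 by (intro mult_left_mono) auto
    finally show ?thesis
      by (simp add: K_def exp_add[symmetric] algebra_simps)
  qed
  have "filterlim (\<lambda>t. K * exp (c * t)) at_top at_top"
    using K cpos by real_asymp
  thus ?thesis
    by (rule filterlim_at_top_mono) (auto simp: eventually_at_top_linorder intro!: exI[of _ T] lowb)
qed

theorem lemma17:
  fixes h Rm \<mu> :: real and q :: "real \<Rightarrow> real" and j :: "(real \<Rightarrow> real \<times> real) \<Rightarrow> real"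
    and \<phi> x :: "real \<Rightarrow> real \<times> real"
  assumes "h > 0" and "Rm < 0" and "\<mu> \<ge> 0"
    and "H1 h Rm j" and "H2 Rm q" and "Xplus h Rm q j \<mu> \<noteq> {}"
    and "q 0 > 0"
    and "\<phi> \<in> Xplus h Rm q j \<mu>" and "fst (\<phi> 0) > 0"
    and "is_solution h Rm q j \<mu> \<phi> x"
  shows "(((\<lambda>t. snd (x t)) \<longlongrightarrow> 0) at_top \<longrightarrow> filterlim (\<lambda>t. fst (x t)) at_top at_top)
       \<and> \<not> ((x \<longlongrightarrow> (0, 0)) at_top)"
proof (intro conjI impI notI)
  show "filterlim (\<lambda>t. fst (x t)) at_top at_top" if "((\<lambda>t. snd (x t)) \<longlongrightarrow> 0) at_top"
    using main_growth[OF assms(1,5,7,2,9,10) that] .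
next
  assume xl: "(x \<longlongrightarrow> (0, 0)) at_top"
  have "((\<lambda>t. snd (x t)) \<longlongrightarrow> 0) at_top" using tendsto_snd[OF xl] by simp
  from main_growth[OF assms(1,5,7,2,9,10) this]
  have e1: "eventually (\<lambda>t. fst (x t) > 1) at_top"
    by (simp add: filterlim_at_top_dense)
  have "((\<lambda>t. fst (x t)) \<longlongrightarrow> 0) at_top" using tendsto_fst[OF xl] by simp
  hence e2: "eventually (\<lambda>t. fst (x t) < 1) at_top"
    by (intro order_tendstoD) auto
  obtain T where "\<And>t. t \<ge> T \<Longrightarrow> 1 < fst (x t) \<and> fst (x t) < 1"
    using eventually_conj[OF e1 e2] by (auto simp: eventually_at_top_linorder)
  thus False by force
qed

end
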